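(* There exists a universal constant $K>0$ such that the following holds. Let $n\ge 1$, $\mu_0\in\mathbb R^n$, $\sigma_0>0$, $\epsilon\in(0,\sigma_0)$, and let $(\mu_1,\sigma_1)\in\mathbb R^n\times(0,\infty)$ satisfy $d((\mu_1,\sigma_1),(\mu_0,\sigma_0))\ge \epsilon$. Then there exists a measurable test $\varphi_n:\mathbb R^n\to\{0,1\}$ such that $$\mathbb E_{\mu_0,\sigma_0}\varphi_n\le e^{-Kn\epsilon^2/\sigma_0^2},\qquad \sup_{(\mu,\sigma)\in\mathbb R^n\times(0,\infty):\ d((\mu,\sigma),(\mu_1,\sigma_1))\le \epsilon/6}\mathbb E_{\mu,\sigma}(1-\varphi_n)\le e^{-Kn\epsilon^2/\sigma_0^2}.$$
   Context: For $\mu\in\mathbb R^n$ and $\sigma>0$, $P_{\mu,\sigma}$ denotes the Gaussian distribution $\mathrm N_n(\mu,\sigma^2 I_n)$ of the observation $y\in\mathbb R^n$ and $\mathbb E_{\mu,\sigma}$ the expectation under it. $\lVert\cdot\rVert_2$ is the Euclidean norm. The metric $d$ on $\mathbb R^n\times(0,\infty)$ is defined by $d^2((\mu_1,\sigma_1),(\mu_2,\sigma_2))=n^{-1}\lVert\mu_1-\mu_2\rVert_2^2+|\sigma_1-\sigma_2|^2$. The constant $K$ does not depend on $n,\epsilon,\mu_0,\sigma_0,\mu_1,\sigma_1$. *)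

theory Defs
  imports "HOL-Probability.Probability"
begin

text \<open>Gaussian N_n(mu, s^2 I_n) on R^n, with R^n rendered as functions on the
index set {..<n} (extensional, PiM).  Only the coordinates i < n of mu matter.\<close>
definition gauss :: "nat \<Rightarrow> (nat \<Rightarrow> real) \<Rightarrow> real \<Rightarrow> (nat \<Rightarrow> real) measure" where
  "gauss n mu s = PiM {..<n} (\<lambda>i. density lborel (normal_density (mu i) s))"

definition gdist :: "nat \<Rightarrow> (nat \<Rightarrow> real) \<times> real \<Rightarrow> (nat \<Rightarrow> real) \<times> real \<Rightarrow> real" where
  "gdist n p q = sqrt ((\<Sum>i<n. (fst p i - fst q i)^2) / real n + (snd p - snd q)^2)"

end

theory Submission
  imports Defs
begin


lemma expo_id:
  fixes a b c m s x :: real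
  assumes s: "s > 0" and g: "1 - 2*a * s\<^sup>2 > 0"
  defines "gm \<equiv> 1 - 2*a * s\<^sup>2"
  defines "u0 \<equiv> (b * s\<^sup>2 + (m-c)) / gm"
  shows "-(x-m)\<^sup>2/(2 * s\<^sup>2) + (a*(x-c)\<^sup>2 + b*(x-c)) =
     ((b * s\<^sup>2 + (m-c))\<^sup>2/gm - (m-c)\<^sup>2)/(2 * s\<^sup>2) - (x-(c+u0))\<^sup>2/(2*(s/sqrt gm)\<^sup>2)"
proof -
  have gp: "gm > 0" using g gm_def by simp
  have sq: "(s/sqrt gm)\<^sup>2 = s\<^sup>2/gm" using gp by (simp add: power_divide)
  have aeq: "a = (1 - gm) / (2 * s\<^sup>2)" using s unfolding gm_def by (simp add: field_simps)
  define u where "u = x - c"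
  define mu where "mu = m - c"
  have x: "x - m = u - mu" "x - c = u" "x - (c + u0) = u - u0" "m - c = mu" unfolding u_def mu_def by auto
  have k: "(u - u0)\<^sup>2 = u\<^sup>2 - 2 * u * (b * s\<^sup>2 + mu) / gm + (b * s\<^sup>2 + mu)\<^sup>2 / gm\<^sup>2"
    unfolding u0_def x using gp by (simp add: field_simps power2_eq_square)
  show ?thesis unfolding sq x k aeq using gp s
    by (simp add: field_simps power2_eq_square)
qed

lemma gauss1_mgf:
  fixes a b c m s :: real
  assumes s: "s > 0" and g: "1 - 2*a * s\<^sup>2 > 0"
  shows "(\<integral>\<^sup>+x. ennreal (exp (a*(x-c)\<^sup>2 + b*(x-c))) \<partial>density lborel (normal_density m s)) =
     ennreal (exp (((b * s\<^sup>2 + (m-c))\<^sup>2/(1-2*a * s\<^sup>2) - (m-c)\<^sup>2)/(2 * s\<^sup>2)) / sqrt (1-2*a * s\<^sup>2))"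
proof -
  define gm where "gm = 1 - 2*a * s\<^sup>2"
  define u0 where "u0 = (b * s\<^sup>2 + (m-c)) / gm"
  define R where "R = ((b * s\<^sup>2 + (m-c))\<^sup>2/gm - (m-c)\<^sup>2)/(2 * s\<^sup>2)"
  have gp: "gm > 0" using g gm_def by simp
  have pt: "normal_density m s x * exp (a*(x-c)\<^sup>2 + b*(x-c)) = (exp R / sqrt gm) * normal_density (c+u0) (s/sqrt gm) x" for x
  proof -
    have e: "-(x-m)\<^sup>2/(2 * s\<^sup>2) + (a*(x-c)\<^sup>2 + b*(x-c)) = R - (x-(c+u0))\<^sup>2/(2*(s/sqrt gm)\<^sup>2)"
      using expo_id[OF s g, where x=x and m=m and c=c and b=b] unfolding R_def u0_def gm_def by simp
    have sq: "sqrt (2*pi*(s/sqrt gm)\<^sup>2) = sqrt (2*pi * s\<^sup>2) / sqrt gm"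
      using gp s by (simp add: power_divide real_sqrt_divide)
    have "normal_density m s x * exp (a*(x-c)\<^sup>2 + b*(x-c)) = 1 / sqrt (2*pi * s\<^sup>2) * exp (-(x-m)\<^sup>2/(2 * s\<^sup>2) + (a*(x-c)\<^sup>2 + b*(x-c)))"
      unfolding normal_density_def exp_add[of "-(x-m)\<^sup>2/(2 * s\<^sup>2)"] by simp
    also have "\<dots> = 1 / sqrt (2*pi * s\<^sup>2) * exp (R - (x-(c+u0))\<^sup>2/(2*(s/sqrt gm)\<^sup>2))" using e by simp
    also have "\<dots> = (exp R / sqrt gm) * normal_density (c+u0) (s/sqrt gm) x"
    proof -
      define E where "E = (x-(c+u0))\<^sup>2/(2*(s/sqrt gm)\<^sup>2)"
      have "normal_density (c+u0) (s/sqrt gm) x = sqrt gm / sqrt (2*pi * s\<^sup>2) * (1 / exp E)"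
        unfolding normal_density_def sq E_def using gp by (simp add: exp_minus inverse_eq_divide)
      then show ?thesis unfolding E_def[symmetric] exp_diff using gp s by (simp add: field_simps)
    qed
    finally show ?thesis .
  qed
  have "(\<integral>\<^sup>+x. ennreal (exp (a*(x-c)\<^sup>2 + b*(x-c))) \<partial>density lborel (normal_density m s)) =
        (\<integral>\<^sup>+x. ennreal (normal_density m s x) * ennreal (exp (a*(x-c)\<^sup>2 + b*(x-c))) \<partial>lborel)"
    by (subst nn_integral_density) auto
  also have "\<dots> = (\<integral>\<^sup>+x. ennreal (exp R / sqrt gm) * ennreal (normal_density (c+u0) (s/sqrt gm) x) \<partial>lborel)"
    using gp by (intro nn_integral_cong) (simp add: pt ennreal_mult'[symmetric])
  also have "\<dots> = ennreal (exp R / sqrt gm) * (\<integral>\<^sup>+x. ennreal (normal_density (c+u0) (s/sqrt gm) x) \<partial>lborel)"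
    by (rule nn_integral_cmult) auto
  also have "(\<integral>\<^sup>+x. ennreal (normal_density (c+u0) (s/sqrt gm) x) \<partial>lborel) = 1"
  proof -
    have sp: "s / sqrt gm > 0" using s gp by simp
    show ?thesis by (subst nn_integral_eq_integral) (auto intro: integrable_normal_density[OF sp] simp: integral_normal_density[OF sp])
  qed
  finally show ?thesis unfolding R_def gm_def by simp
qed



definition G :: "real \<Rightarrow> real \<Rightarrow> real \<Rightarrow> real \<Rightarrow> real" where
  "G a b mu s = exp (((b * s\<^sup>2 + mu)\<^sup>2/(1 - 2 * a * s\<^sup>2) - mu\<^sup>2)/(2 * s\<^sup>2)) / sqrt (1 - 2 * a * s\<^sup>2)"

lemma gauss_space: "space (gauss n mu s) = space (PiM {..<n} (\<lambda>_. lborel))"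
  unfolding gauss_def by (simp add: space_PiM)

lemma gauss_sets: "sets (gauss n mu s) = sets (PiM {..<n} (\<lambda>_. lborel))"
  unfolding gauss_def by (intro sets_PiM_cong) auto

lemma gauss_prob: "s > 0 \<Longrightarrow> prob_space (gauss n mu s)"
  unfolding gauss_def by (rule prob_space_PiM) (rule prob_space_normal_density)

lemma gauss_chernoff:
  fixes a t :: real and b c mu :: "nat \<Rightarrow> real"
  assumes s: "s > 0" and g: "1 - 2 * a * s\<^sup>2 > 0"
  shows "emeasure (gauss n mu s) {x \<in> space (gauss n mu s). t \<le> (\<Sum>i<n. a * (x i - c i)\<^sup>2 + b i * (x i - c i))}
     \<le> ennreal (exp (-t) * (\<Prod>i<n. G a (b i) (mu i - c i) s))"
proof -
  let ?M = "\<lambda>i. density lborel (normal_density (mu i) s)"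
  interpret product_sigma_finite ?M
    unfolding product_sigma_finite_def
    using prob_space_imp_sigma_finite[OF prob_space_normal_density] s by blast
  let ?A = "{x \<in> space (gauss n mu s). t \<le> (\<Sum>i<n. a * (x i - c i)\<^sup>2 + b i * (x i - c i))}"
  let ?h = "\<lambda>i y. a * (y - c i)\<^sup>2 + b i * (y - c i)"
  have Am: "?A \<in> sets (gauss n mu s)"
    unfolding gauss_sets gauss_space by measurable
  have "emeasure (gauss n mu s) ?A = (\<integral>\<^sup>+x. indicator ?A x \<partial>gauss n mu s)"
    using Am by simp
  also have "\<dots> \<le> (\<integral>\<^sup>+x. ennreal (exp (-t)) * (\<Prod>i\<in>{..<n}. ennreal (exp (?h i (x i)))) \<partial>gauss n mu s)"
  proof (rule nn_integral_mono)
    fix x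
    have "exp (-t) * (\<Prod>i\<in>{..<n}. exp (?h i (x i))) = exp ((\<Sum>i<n. ?h i (x i)) - t)"
      by (simp add: exp_sum exp_diff exp_minus field_simps)
    moreover have "indicator ?A x \<le> ennreal (exp ((\<Sum>i<n. ?h i (x i)) - t))"
      by (auto simp: indicator_def)
    ultimately show "indicator ?A x \<le> ennreal (exp (-t)) * (\<Prod>i\<in>{..<n}. ennreal (exp (?h i (x i))))"
      by (simp add: prod_ennreal ennreal_mult'[symmetric])
  qed
  also have "\<dots> = ennreal (exp (-t)) * (\<integral>\<^sup>+x. (\<Prod>i\<in>{..<n}. ennreal (exp (?h i (x i)))) \<partial>gauss n mu s)"
    by (rule nn_integral_cmult) (unfold gauss_def, measurable)
  also have "(\<integral>\<^sup>+x. (\<Prod>i\<in>{..<n}. ennreal (exp (?h i (x i)))) \<partial>gauss n mu s)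
      = (\<Prod>i\<in>{..<n}. (\<integral>\<^sup>+y. ennreal (exp (?h i y)) \<partial>?M i))"
    unfolding gauss_def by (rule product_nn_integral_prod) auto
  also have "\<dots> = (\<Prod>i\<in>{..<n}. ennreal (G a (b i) (mu i - c i) s))"
    by (intro prod.cong refl) (simp add: gauss1_mgf[OF s g] G_def)
  also have "\<dots> = ennreal (\<Prod>i<n. G a (b i) (mu i - c i) s)"
    by (rule prod_ennreal) (use g in \<open>simp add: G_def\<close>)
  finally show ?thesis by (simp add: ennreal_mult'[symmetric])
qed



lemma exp_sqrt_pow:
  assumes "g > 0"
  shows "exp A * (1 / sqrt g) ^ n = exp (A - real n * ln g / 2)"
proof -
  have "sqrt g = exp (ln g / 2)" using assms powr_half_sqrt[of g] by (simp add: powr_def)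
  then have "(1 / sqrt g) ^ n = exp (- (real n * ln g / 2))"
    by (simp add: exp_minus power_divide exp_of_nat_mult[symmetric] inverse_eq_divide)
  then show ?thesis unfolding diff_conv_add_uminus[of A] exp_add by simp
qed

lemma G_b0: "G a 0 mu s = exp (a * mu\<^sup>2 / (1 - 2 * a * s\<^sup>2)) / sqrt (1 - 2 * a * s\<^sup>2)"
  if "s > 0" "1 - 2 * a * s\<^sup>2 > 0"
proof -
  define gm where "gm = 1 - 2 * a * s\<^sup>2"
  have gp: "gm > 0" using that gm_def by simp
  have aeq: "a = (1 - gm) / (2 * s\<^sup>2)" using that unfolding gm_def by (simp add: field_simps)
  have "((0 * s\<^sup>2 + mu)\<^sup>2/gm - mu\<^sup>2)/(2 * s\<^sup>2) = a * mu\<^sup>2 / gm"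
    unfolding aeq using gp that by (simp add: field_simps)
  then show ?thesis unfolding G_def gm_def[symmetric] by simp
qed

lemma G_a0: "G 0 b mu s = exp (b * mu + b\<^sup>2 * s\<^sup>2 / 2)"
  if "s > 0"
  using that unfolding G_def by (simp add: field_simps power2_eq_square)

lemma meas_le:
  assumes "emeasure M A \<le> ennreal e" "e \<ge> 0"
  shows "measure M A \<le> e"
  using assms by (simp add: measure_def enn2real_leI)

lemma chern_sets: "{x \<in> space (gauss n mu s). t \<le> (\<Sum>i<n. a * (x i - c i)\<^sup>2 + b i * (x i - c i))} \<in> sets (gauss n mu s)"
  unfolding gauss_sets gauss_space by measurable



lemma caseA_null:
  fixes mu0 :: "nat \<Rightarrow> real"
  assumes sg: "sg > 0" and d: "0 < d" "d < sg"
  shows "measure (gauss n mu0 sg) {x \<in> space (gauss n mu0 sg). real n * (sg\<^sup>2 + sg * d / 3) < (\<Sum>i<n. (x i - mu0 i)\<^sup>2)}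
     \<le> exp (- real n * d\<^sup>2 / sg\<^sup>2 / 144)"
proof -
  define w where "w = d / sg"
  have w: "0 < w" "w < 1" using sg d unfolding w_def by auto
  define xx where "xx = w / 12"
  define l where "l = xx / (2 * sg\<^sup>2)"
  define T where "T = real n * (sg\<^sup>2 + sg * d / 3)"
  have lp: "l > 0" using w sg unfolding l_def xx_def by simp
  have gam: "1 - 2 * l * sg\<^sup>2 = 1 - xx" using sg unfolding l_def by simp
  have g: "1 - 2 * l * sg\<^sup>2 > 0" using w unfolding gam xx_def by simp
  let ?S = "{x \<in> space (gauss n mu0 sg). T < (\<Sum>i<n. (x i - mu0 i)\<^sup>2)}"
  let ?C = "{x \<in> space (gauss n mu0 sg). l * T \<le> (\<Sum>i<n. l * (x i - mu0 i)\<^sup>2 + (\<lambda>_. 0) i * (x i - mu0 i))}"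
  have sub: "?S \<subseteq> ?C" using lp by (auto simp: sum_distrib_left[symmetric])
  have "emeasure (gauss n mu0 sg) ?S \<le> emeasure (gauss n mu0 sg) ?C"
    by (rule emeasure_mono[OF sub chern_sets])
  also have "\<dots> \<le> ennreal (exp (- (l * T)) * (\<Prod>i<n. G l ((\<lambda>_. 0) i) (mu0 i - mu0 i) sg))"
    by (rule gauss_chernoff[OF sg g])
  also have "(\<Prod>i<n. G l ((\<lambda>_. 0) i) (mu0 i - mu0 i) sg) = (1 / sqrt (1 - xx)) ^ n"
    using G_b0[OF sg g, of 0] gam by simp
  also have "exp (- (l * T)) * (1 / sqrt (1 - xx)) ^ n = exp (- (l * T) - real n * ln (1 - xx) / 2)"
    using w xx_def by (intro exp_sqrt_pow) simp
  also have "\<dots> \<le> exp (- real n * d\<^sup>2 / sg\<^sup>2 / 144)"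
  proof -
    have lT: "l * T = real n * (xx * (1 + w / 3) / 2)"
      unfolding l_def T_def w_def using sg by (simp add: field_simps power2_eq_square)
    have ln: "- xx - 2 * xx\<^sup>2 \<le> ln (1 - xx)" using w unfolding xx_def by (intro ln_one_minus_pos_lower_bound) auto
    have "- (xx * (1 + w / 3) / 2) - ln (1 - xx) / 2 \<le> - (xx * (1 + w / 3) / 2) + (xx + 2 * xx\<^sup>2) / 2"
      using ln by simp
    also have "\<dots> = - w\<^sup>2 / 144" unfolding xx_def by (simp add: field_simps power2_eq_square)
    finally have u: "- (xx * (1 + w / 3) / 2) - ln (1 - xx) / 2 \<le> - w\<^sup>2 / 144" .
    have "- (l * T) - real n * ln (1 - xx) / 2 = real n * (- (xx * (1 + w / 3) / 2) - ln (1 - xx) / 2)"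
      unfolding lT by (simp add: algebra_simps)
    also have "\<dots> \<le> real n * (- w\<^sup>2 / 144)" using u by (intro mult_left_mono) auto
    also have "\<dots> = - real n * d\<^sup>2 / sg\<^sup>2 / 144" unfolding w_def by (simp add: power_divide)
    finally show ?thesis by simp
  qed
  finally have "emeasure (gauss n mu0 sg) ?S \<le> ennreal (exp (- real n * d\<^sup>2 / sg\<^sup>2 / 144))"
    using ennreal_leI by blast
  then show ?thesis unfolding T_def by (intro meas_le) auto
qed



lemma caseA_alt:
  fixes mu0 mu :: "nat \<Rightarrow> real"
  assumes sg: "sg > 0" and d: "0 < d" "d < sg" and s: "s > 0" "sg + d / 3 \<le> s"
  shows "measure (gauss n mu s) {x \<in> space (gauss n mu s). (\<Sum>i<n. (x i - mu0 i)\<^sup>2) \<le> real n * (sg\<^sup>2 + sg * d / 3)}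
     \<le> exp (- real n * d\<^sup>2 / sg\<^sup>2 / 200)"
proof -
  define w where "w = d / sg"
  have w: "0 < w" "w < 1" using sg d unfolding w_def by auto
  define y where "y = w / 10"
  define l where "l = y / (2 * s\<^sup>2)"
  define T where "T = real n * (sg\<^sup>2 + sg * d / 3)"
  have lp: "l > 0" using w s unfolding l_def y_def by simp
  have gam: "1 - 2 * (-l) * s\<^sup>2 = 1 + y" using s unfolding l_def by simp
  have g: "1 - 2 * (-l) * s\<^sup>2 > 0" using w unfolding gam y_def by simp
  let ?S = "{x \<in> space (gauss n mu s). (\<Sum>i<n. (x i - mu0 i)\<^sup>2) \<le> T}"
  let ?C = "{x \<in> space (gauss n mu s). - (l * T) \<le> (\<Sum>i<n. (-l) * (x i - mu0 i)\<^sup>2 + (\<lambda>_. 0) i * (x i - mu0 i))}"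
  have sub: "?S \<subseteq> ?C" using lp by (auto simp: sum_negf sum_distrib_left[symmetric])
  have "emeasure (gauss n mu s) ?S \<le> emeasure (gauss n mu s) ?C"
    by (rule emeasure_mono[OF sub chern_sets])
  also have "\<dots> \<le> ennreal (exp (- (- (l * T))) * (\<Prod>i<n. G (-l) ((\<lambda>_. 0) i) (mu i - mu0 i) s))"
    by (rule gauss_chernoff[OF s(1) g])
  also have "\<dots> = ennreal (exp (l * T) * (\<Prod>i<n. G (-l) ((\<lambda>_. 0) i) (mu i - mu0 i) s))" by simp
  also have "\<dots> \<le> ennreal (exp (l * T) * (1 / sqrt (1 + y)) ^ n)"
  proof (intro ennreal_leI mult_left_mono)
    have "(\<Prod>i<n. G (-l) ((\<lambda>_. 0) i) (mu i - mu0 i) s) \<le> (\<Prod>i<n. 1 / sqrt (1 + y))"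
    proof (rule prod_mono)
      fix i
      have "G (-l) 0 (mu i - mu0 i) s = exp ((-l) * (mu i - mu0 i)\<^sup>2 / (1 + y)) / sqrt (1 + y)"
        using G_b0[OF s(1) g] gam by simp
      moreover have "exp ((-l) * (mu i - mu0 i)\<^sup>2 / (1 + y)) \<le> 1"
        using lp w y_def by (simp add: divide_nonpos_pos mult_nonpos_nonneg)
      moreover have "0 < sqrt (1 + y)" using w y_def by simp
      ultimately show "0 \<le> G (-l) ((\<lambda>_. 0) i) (mu i - mu0 i) s \<and> G (-l) ((\<lambda>_. 0) i) (mu i - mu0 i) s \<le> 1 / sqrt (1 + y)"
        by (simp add: divide_right_mono)
    qed
    then show "(\<Prod>i<n. G (-l) ((\<lambda>_. 0) i) (mu i - mu0 i) s) \<le> (1 / sqrt (1 + y)) ^ n" by simp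
  qed simp
  also have "exp (l * T) * (1 / sqrt (1 + y)) ^ n = exp (l * T - real n * ln (1 + y) / 2)"
    using w y_def by (intro exp_sqrt_pow) simp
  also have "\<dots> \<le> exp (- real n * d\<^sup>2 / sg\<^sup>2 / 200)"
  proof -
    define rho where "rho = (sg\<^sup>2 + sg * d / 3) / s\<^sup>2"
    have lT: "l * T = real n * (y * rho / 2)"
      unfolding l_def T_def rho_def using s by (simp add: field_simps power2_eq_square)
    have s2: "s\<^sup>2 \<ge> sg\<^sup>2 + 2 * sg * d / 3"
    proof -
      have "(sg + d / 3)\<^sup>2 \<le> s\<^sup>2" using s sg d by (intro power_mono) auto
      moreover have "(sg + d / 3)\<^sup>2 \<ge> sg\<^sup>2 + 2 * sg * d / 3" by (simp add: power2_eq_square field_simps)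
      ultimately show ?thesis by linarith
    qed
    have "s\<^sup>2 * (1 - w / 5) \<ge> (sg\<^sup>2 + 2 * sg * d / 3) * (1 - w / 5)"
      using s2 w by (intro mult_right_mono) auto
    moreover have "(sg\<^sup>2 + 2 * sg * d / 3) * (1 - w / 5) = sg\<^sup>2 + 7 * sg * d / 15 - 2 * d\<^sup>2 / 15"
      unfolding w_def using sg by (simp add: field_simps power2_eq_square)
    moreover have "d\<^sup>2 \<le> sg * d" using d by (simp add: power2_eq_square)
    ultimately have "sg\<^sup>2 + sg * d / 3 \<le> s\<^sup>2 * (1 - w / 5)" by linarith
    then have rho: "rho \<le> 1 - w / 5" unfolding rho_def using s by (simp add: field_simps)
    have ln: "y - y\<^sup>2 \<le> ln (1 + y)" using w unfolding y_def by (intro ln_one_plus_pos_lower_bound) auto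
    have "y * rho / 2 - ln (1 + y) / 2 \<le> y * (1 - w / 5) / 2 - (y - y\<^sup>2) / 2"
    proof -
      have "y * rho \<le> y * (1 - w / 5)" using rho w y_def by (intro mult_left_mono) auto
      then show ?thesis using ln by (simp add: field_simps)
    qed
    also have "\<dots> = - w\<^sup>2 / 200" unfolding y_def by (simp add: field_simps power2_eq_square)
    finally have u: "y * rho / 2 - ln (1 + y) / 2 \<le> - w\<^sup>2 / 200" .
    have "l * T - real n * ln (1 + y) / 2 = real n * (y * rho / 2 - ln (1 + y) / 2)"
      unfolding lT by (simp add: algebra_simps)
    also have "\<dots> \<le> real n * (- w\<^sup>2 / 200)" using u by (intro mult_left_mono) auto
    also have "\<dots> = - real n * d\<^sup>2 / sg\<^sup>2 / 200" unfolding w_def by (simp add: power_divide)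
    finally show ?thesis by simp
  qed
  finally have "emeasure (gauss n mu s) ?S \<le> ennreal (exp (- real n * d\<^sup>2 / sg\<^sup>2 / 200))"
    using ennreal_leI by blast
  then show ?thesis unfolding T_def by (intro meas_le) auto
qed



lemma caseB_null:
  fixes mu0 mu1 :: "nat \<Rightarrow> real"
  assumes sg: "sg > 0" and d: "0 < d" "d < sg"
  shows "measure (gauss n mu0 sg) {x \<in> space (gauss n mu0 sg). (\<Sum>i<n. (x i - mu1 i)\<^sup>2) < real n * (sg\<^sup>2 - sg * d / 3)}
     \<le> exp (- real n * d\<^sup>2 / sg\<^sup>2 / 72)"
proof -
  define w where "w = d / sg"
  have w: "0 < w" "w < 1" using sg d unfolding w_def by auto
  define y where "y = w / 6"
  define l where "l = y / (2 * sg\<^sup>2)"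
  define T where "T = real n * (sg\<^sup>2 - sg * d / 3)"
  have lp: "l > 0" using w sg unfolding l_def y_def by simp
  have gam: "1 - 2 * (-l) * sg\<^sup>2 = 1 + y" using sg unfolding l_def by simp
  have g: "1 - 2 * (-l) * sg\<^sup>2 > 0" using w unfolding gam y_def by simp
  let ?S = "{x \<in> space (gauss n mu0 sg). (\<Sum>i<n. (x i - mu1 i)\<^sup>2) < T}"
  let ?C = "{x \<in> space (gauss n mu0 sg). - (l * T) \<le> (\<Sum>i<n. (-l) * (x i - mu1 i)\<^sup>2 + (\<lambda>_. 0) i * (x i - mu1 i))}"
  have sub: "?S \<subseteq> ?C" using lp by (auto simp: sum_negf sum_distrib_left[symmetric])
  have "emeasure (gauss n mu0 sg) ?S \<le> emeasure (gauss n mu0 sg) ?C"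
    by (rule emeasure_mono[OF sub chern_sets])
  also have "\<dots> \<le> ennreal (exp (- (- (l * T))) * (\<Prod>i<n. G (-l) ((\<lambda>_. 0) i) (mu0 i - mu1 i) sg))"
    by (rule gauss_chernoff[OF sg g])
  also have "\<dots> = ennreal (exp (l * T) * (\<Prod>i<n. G (-l) ((\<lambda>_. 0) i) (mu0 i - mu1 i) sg))" by simp
  also have "\<dots> \<le> ennreal (exp (l * T) * (1 / sqrt (1 + y)) ^ n)"
  proof (intro ennreal_leI mult_left_mono)
    have "(\<Prod>i<n. G (-l) ((\<lambda>_. 0) i) (mu0 i - mu1 i) sg) \<le> (\<Prod>i<n. 1 / sqrt (1 + y))"
    proof (rule prod_mono)
      fix i
      have "G (-l) 0 (mu0 i - mu1 i) sg = exp ((-l) * (mu0 i - mu1 i)\<^sup>2 / (1 + y)) / sqrt (1 + y)"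
        using G_b0[OF sg g] gam by simp
      moreover have "exp ((-l) * (mu0 i - mu1 i)\<^sup>2 / (1 + y)) \<le> 1"
        using lp w y_def by (simp add: divide_nonpos_pos mult_nonpos_nonneg)
      moreover have "0 < sqrt (1 + y)" using w y_def by simp
      ultimately show "0 \<le> G (-l) ((\<lambda>_. 0) i) (mu0 i - mu1 i) sg \<and> G (-l) ((\<lambda>_. 0) i) (mu0 i - mu1 i) sg \<le> 1 / sqrt (1 + y)"
        by (simp add: divide_right_mono)
    qed
    then show "(\<Prod>i<n. G (-l) ((\<lambda>_. 0) i) (mu0 i - mu1 i) sg) \<le> (1 / sqrt (1 + y)) ^ n" by simp
  qed simp
  also have "exp (l * T) * (1 / sqrt (1 + y)) ^ n = exp (l * T - real n * ln (1 + y) / 2)"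
    using w y_def by (intro exp_sqrt_pow) simp
  also have "\<dots> \<le> exp (- real n * d\<^sup>2 / sg\<^sup>2 / 72)"
  proof -
    have lT: "l * T = real n * (y * (1 - w / 3) / 2)"
      unfolding l_def T_def w_def using sg by (simp add: field_simps power2_eq_square)
    have ln: "y - y\<^sup>2 \<le> ln (1 + y)" using w unfolding y_def by (intro ln_one_plus_pos_lower_bound) auto
    have "y * (1 - w / 3) / 2 - ln (1 + y) / 2 \<le> y * (1 - w / 3) / 2 - (y - y\<^sup>2) / 2"
      using ln by simp
    also have "\<dots> = - w\<^sup>2 / 72" unfolding y_def by (simp add: field_simps power2_eq_square)
    finally have u: "y * (1 - w / 3) / 2 - ln (1 + y) / 2 \<le> - w\<^sup>2 / 72" .
    have "l * T - real n * ln (1 + y) / 2 = real n * (y * (1 - w / 3) / 2 - ln (1 + y) / 2)"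
      unfolding lT by (simp add: algebra_simps)
    also have "\<dots> \<le> real n * (- w\<^sup>2 / 72)" using u by (intro mult_left_mono) auto
    also have "\<dots> = - real n * d\<^sup>2 / sg\<^sup>2 / 72" unfolding w_def by (simp add: power_divide)
    finally show ?thesis by simp
  qed
  finally have "emeasure (gauss n mu0 sg) ?S \<le> ennreal (exp (- real n * d\<^sup>2 / sg\<^sup>2 / 72))"
    using ennreal_leI by blast
  then show ?thesis unfolding T_def by (intro meas_le) auto
qed

lemma caseB_alt:
  fixes mu1 mu :: "nat \<Rightarrow> real"
  assumes sg: "sg > 0" and d: "0 < d" "d < sg" and s: "s > 0" "s \<le> sg - d / 3"
    and M: "(\<Sum>i<n. (mu i - mu1 i)\<^sup>2) \<le> real n * (d\<^sup>2 / 36)"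
  shows "measure (gauss n mu s) {x \<in> space (gauss n mu s). real n * (sg\<^sup>2 - sg * d / 3) \<le> (\<Sum>i<n. (x i - mu1 i)\<^sup>2)}
     \<le> exp (- real n * d\<^sup>2 / sg\<^sup>2 / 432)"
proof -
  define w where "w = d / sg"
  have w: "0 < w" "w < 1" using sg d unfolding w_def by auto
  define xx where "xx = w / 24"
  define l where "l = xx / (2 * s\<^sup>2)"
  define T where "T = real n * (sg\<^sup>2 - sg * d / 3)"
  define MM where "MM = (\<Sum>i<n. (mu i - mu1 i)\<^sup>2)"
  have lp: "l > 0" using w s unfolding l_def xx_def by simp
  have gam: "1 - 2 * l * s\<^sup>2 = 1 - xx" using s unfolding l_def by simp
  have g: "1 - 2 * l * s\<^sup>2 > 0" using w unfolding gam xx_def by simp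
  let ?S = "{x \<in> space (gauss n mu s). T \<le> (\<Sum>i<n. (x i - mu1 i)\<^sup>2)}"
  let ?C = "{x \<in> space (gauss n mu s). l * T \<le> (\<Sum>i<n. l * (x i - mu1 i)\<^sup>2 + (\<lambda>_. 0) i * (x i - mu1 i))}"
  have sub: "?S \<subseteq> ?C" using lp by (auto simp: sum_distrib_left[symmetric])
  have "emeasure (gauss n mu s) ?S \<le> emeasure (gauss n mu s) ?C"
    by (rule emeasure_mono[OF sub chern_sets])
  also have "\<dots> \<le> ennreal (exp (- (l * T)) * (\<Prod>i<n. G l ((\<lambda>_. 0) i) (mu i - mu1 i) s))"
    by (rule gauss_chernoff[OF s(1) g])
  also have "(\<Prod>i<n. G l ((\<lambda>_. 0) i) (mu i - mu1 i) s) = exp (l * MM / (1 - xx)) * (1 / sqrt (1 - xx)) ^ n"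
  proof -
    have "(\<Prod>i<n. G l ((\<lambda>_. 0) i) (mu i - mu1 i) s) = (\<Prod>i<n. exp (l * (mu i - mu1 i)\<^sup>2 / (1 - xx)) * (1 / sqrt (1 - xx)))"
      using G_b0[OF s(1) g] gam by simp
    also have "\<dots> = exp (\<Sum>i<n. l * (mu i - mu1 i)\<^sup>2 / (1 - xx)) * (1 / sqrt (1 - xx)) ^ n"
      by (simp add: exp_sum prod_dividef power_one_over)
    also have "(\<Sum>i<n. l * (mu i - mu1 i)\<^sup>2 / (1 - xx)) = l * MM / (1 - xx)"
      unfolding MM_def by (simp add: sum_divide_distrib sum_distrib_left)
    finally show ?thesis .
  qed
  also have "exp (- (l * T)) * (exp (l * MM / (1 - xx)) * (1 / sqrt (1 - xx)) ^ n)
      = exp (- (l * T) + l * MM / (1 - xx)) * (1 / sqrt (1 - xx)) ^ n"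
    unfolding exp_add by (simp only: mult.assoc)
  also have "\<dots> = exp (- (l * T) + l * MM / (1 - xx) - real n * ln (1 - xx) / 2)"
    using w xx_def by (intro exp_sqrt_pow) simp
  also have "\<dots> \<le> exp (- real n * d\<^sup>2 / sg\<^sup>2 / 432)"
  proof -
    have x: "0 < xx" "xx \<le> 1/2" using w unfolding xx_def by auto
    have ls: "l * s\<^sup>2 = xx / 2" unfolding l_def using s by simp
    have inv: "1 / (1 - xx) \<le> 1 + 2 * xx" using x by (simp add: field_simps)
    have "l * MM / (1 - xx) = l * MM * (1 / (1 - xx))" by simp
    also have "\<dots> \<le> l * (real n * (d\<^sup>2 / 36)) * (1 + 2 * xx)"
      using M MM_def lp inv x by (intro mult_mono mult_left_mono) (auto simp: sum_nonneg)
    finally have t1: "l * MM / (1 - xx) \<le> real n * l * ((d\<^sup>2 / 36) * (1 + 2 * xx))" by (simp add: algebra_simps)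
    have ln: "- xx - 2 * xx\<^sup>2 \<le> ln (1 - xx)" using x by (intro ln_one_minus_pos_lower_bound) auto
    have t2: "- (real n * ln (1 - xx) / 2) \<le> real n * l * (s\<^sup>2 * (1 + 2 * xx))"
    proof -
      have e: "l * (s\<^sup>2 * (1 + 2 * xx)) = xx / 2 + xx\<^sup>2"
        by (simp only: mult.assoc[symmetric] ls) (simp add: algebra_simps power2_eq_square)
      have "- (ln (1 - xx) / 2) \<le> l * (s\<^sup>2 * (1 + 2 * xx))" unfolding e using ln by linarith
      then have "real n * (- (ln (1 - xx) / 2)) \<le> real n * (l * (s\<^sup>2 * (1 + 2 * xx)))" by (intro mult_left_mono) auto
      then show ?thesis by (simp add: algebra_simps)
    qed
    have s2: "s\<^sup>2 \<le> (sg - d / 3)\<^sup>2" using s by (intro power_mono) auto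
    have dd: "d\<^sup>2 \<le> sg * d" using d by (simp add: power2_eq_square)
    have b1: "d\<^sup>2 / 36 + s\<^sup>2 \<le> sg\<^sup>2 - 19 * sg * d / 36"
      using s2 dd by (simp add: power2_eq_square algebra_simps)
    have b2: "(d\<^sup>2 / 36 + s\<^sup>2) * (2 * xx) \<le> sg * d / 12"
    proof -
      have "d\<^sup>2 / 36 + s\<^sup>2 \<le> sg\<^sup>2" using b1 mult_pos_pos[OF sg d(1)] by linarith
      then have "(d\<^sup>2 / 36 + s\<^sup>2) * (2 * xx) \<le> sg\<^sup>2 * (2 * xx)" using x by (intro mult_right_mono) auto
      also have "\<dots> = sg * d / 12" unfolding xx_def w_def using sg by (simp add: power2_eq_square field_simps)
      finally show ?thesis .
    qed
    have br: "- (sg\<^sup>2 - sg * d / 3) + (d\<^sup>2 / 36) * (1 + 2 * xx) + s\<^sup>2 * (1 + 2 * xx) \<le> - (sg * d / 9)"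
    proof -
      have e: "- (sg\<^sup>2 - sg * d / 3) + (d\<^sup>2 / 36) * (1 + 2 * xx) + s\<^sup>2 * (1 + 2 * xx) = 
         (d\<^sup>2 / 36 + s\<^sup>2) + (d\<^sup>2 / 36 + s\<^sup>2) * (2 * xx) - sg\<^sup>2 + sg * d / 3" by (simp add: algebra_simps)
      show ?thesis unfolding e using b1 b2 by linarith
    qed
    have "- (l * T) + l * MM / (1 - xx) - real n * ln (1 - xx) / 2
        \<le> real n * l * (- (sg\<^sup>2 - sg * d / 3) + (d\<^sup>2 / 36) * (1 + 2 * xx) + s\<^sup>2 * (1 + 2 * xx))"
    proof -
      have e: "real n * l * (- (sg\<^sup>2 - sg * d / 3) + (d\<^sup>2 / 36) * (1 + 2 * xx) + s\<^sup>2 * (1 + 2 * xx))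
        = - (l * T) + real n * l * ((d\<^sup>2 / 36) * (1 + 2 * xx)) + real n * l * (s\<^sup>2 * (1 + 2 * xx))"
        unfolding T_def by (simp add: algebra_simps)
      show ?thesis unfolding e using t1 t2 by linarith
    qed
    also have "\<dots> \<le> real n * l * (- (sg * d / 9))"
      using br lp by (intro mult_left_mono) auto
    also have "\<dots> = - real n * (w\<^sup>2 * sg\<^sup>2 / s\<^sup>2) / 432"
      unfolding l_def xx_def w_def using sg s by (simp add: field_simps power2_eq_square)
    also have "\<dots> \<le> - real n * w\<^sup>2 / 432"
    proof -
      have "s\<^sup>2 \<le> sg\<^sup>2" using s d by (intro power_mono) auto
      then have "1 \<le> sg\<^sup>2 / s\<^sup>2" using s by simp
      then have "w\<^sup>2 * 1 \<le> w\<^sup>2 * (sg\<^sup>2 / s\<^sup>2)" by (intro mult_left_mono) auto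
      then have "w\<^sup>2 \<le> w\<^sup>2 * (sg\<^sup>2 / s\<^sup>2)" by simp
      then have "real n * w\<^sup>2 \<le> real n * (w\<^sup>2 * sg\<^sup>2 / s\<^sup>2)" by (intro mult_left_mono) auto
      then show ?thesis by simp
    qed
    also have "\<dots> = - real n * d\<^sup>2 / sg\<^sup>2 / 432" unfolding w_def by (simp add: power_divide)
    finally show ?thesis by simp
  qed
  finally have "emeasure (gauss n mu s) ?S \<le> ennreal (exp (- real n * d\<^sup>2 / sg\<^sup>2 / 432))"
    using ennreal_leI by blast
  then show ?thesis unfolding T_def by (intro meas_le) auto
qed



lemma caseC_null:
  fixes mu0 mu1 :: "nat \<Rightarrow> real" and n :: nat
  assumes sg: "sg > 0"
  defines "V \<equiv> (\<Sum>i<n. (mu1 i - mu0 i)\<^sup>2)"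
  shows "measure (gauss n mu0 sg) {x \<in> space (gauss n mu0 sg). V / 2 < (\<Sum>i<n. (mu1 i - mu0 i) * (x i - mu0 i))}
     \<le> exp (- V / (8 * sg\<^sup>2))"
proof -
  define l where "l = 1 / (2 * sg\<^sup>2)"
  have lp: "l > 0" using sg unfolding l_def by simp
  have g: "1 - 2 * 0 * sg\<^sup>2 > (0::real)" by simp
  let ?v = "\<lambda>i. mu1 i - mu0 i"
  let ?S = "{x \<in> space (gauss n mu0 sg). V / 2 < (\<Sum>i<n. ?v i * (x i - mu0 i))}"
  let ?C = "{x \<in> space (gauss n mu0 sg). l * (V / 2) \<le> (\<Sum>i<n. 0 * (x i - mu0 i)\<^sup>2 + (\<lambda>i. l * ?v i) i * (x i - mu0 i))}"
  have sub: "?S \<subseteq> ?C" using lp by (auto simp: sum_distrib_left[symmetric] mult.assoc)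
  have "emeasure (gauss n mu0 sg) ?S \<le> emeasure (gauss n mu0 sg) ?C"
    by (rule emeasure_mono[OF sub chern_sets])
  also have "\<dots> \<le> ennreal (exp (- (l * (V / 2))) * (\<Prod>i<n. G 0 ((\<lambda>i. l * ?v i) i) (mu0 i - mu0 i) sg))"
    by (rule gauss_chernoff[OF sg g])
  also have "(\<Prod>i<n. G 0 ((\<lambda>i. l * ?v i) i) (mu0 i - mu0 i) sg) = exp (l\<^sup>2 * sg\<^sup>2 * V / 2)"
  proof -
    have "(\<Prod>i<n. G 0 ((\<lambda>i. l * ?v i) i) (mu0 i - mu0 i) sg) = (\<Prod>i<n. exp (l\<^sup>2 * sg\<^sup>2 / 2 * (?v i)\<^sup>2))"
      by (intro prod.cong refl) (simp add: G_a0[OF sg] power_mult_distrib mult_ac)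
    also have "\<dots> = exp (\<Sum>i<n. l\<^sup>2 * sg\<^sup>2 / 2 * (?v i)\<^sup>2)" by (simp add: exp_sum)
    also have "(\<Sum>i<n. l\<^sup>2 * sg\<^sup>2 / 2 * (?v i)\<^sup>2) = l\<^sup>2 * sg\<^sup>2 / 2 * V"
      unfolding V_def by (rule sum_distrib_left[symmetric])
    also have "exp (l\<^sup>2 * sg\<^sup>2 / 2 * V) = exp (l\<^sup>2 * sg\<^sup>2 * V / 2)" by simp
    finally show ?thesis .
  qed
  also have "exp (- (l * (V / 2))) * exp (l\<^sup>2 * sg\<^sup>2 * V / 2) = exp (- V / (8 * sg\<^sup>2))"
    unfolding exp_add[symmetric] l_def using sg by (simp add: field_simps power2_eq_square)
  finally show ?thesis by (intro meas_le) auto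
qed

lemma caseC_alt:
  fixes mu0 mu1 mu :: "nat \<Rightarrow> real" and n :: nat
  assumes sg: "sg > 0" and s: "s > 0" "s\<^sup>2 \<le> 4 * sg\<^sup>2"
  defines "V \<equiv> (\<Sum>i<n. (mu1 i - mu0 i)\<^sup>2)"
  assumes M: "(\<Sum>i<n. (mu i - mu1 i)\<^sup>2) \<le> V / 27"
  shows "measure (gauss n mu s) {x \<in> space (gauss n mu s). (\<Sum>i<n. (mu1 i - mu0 i) * (x i - mu0 i)) \<le> V / 2}
     \<le> exp (- V / (200 * sg\<^sup>2))"
proof -
  define l where "l = 1 / (20 * sg\<^sup>2)"
  have lp: "l > 0" using sg unfolding l_def by simp
  have g: "1 - 2 * 0 * s\<^sup>2 > (0::real)" by simp
  let ?v = "\<lambda>i. mu1 i - mu0 i"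
  define P where "P = (\<Sum>i<n. ?v i * (mu i - mu0 i))"
  have V0: "V \<ge> 0" unfolding V_def by (simp add: sum_nonneg)
  have P: "P \<ge> 7 * V / 10"
  proof -
    have "P = V + (\<Sum>i<n. ?v i * (mu i - mu1 i))"
      unfolding P_def V_def by (simp add: sum.distrib[symmetric] power2_eq_square algebra_simps)
    moreover have "(\<Sum>i<n. ?v i * (mu i - mu1 i)) \<ge> - (\<Sum>i<n. (?v i)\<^sup>2 / 4 + (mu i - mu1 i)\<^sup>2)"
    proof -
      have "(\<Sum>i<n. - ((?v i)\<^sup>2 / 4 + (mu i - mu1 i)\<^sup>2)) \<le> (\<Sum>i<n. ?v i * (mu i - mu1 i))"
      proof (rule sum_mono)
        fix i
        have "0 \<le> (?v i / 2 + (mu i - mu1 i))\<^sup>2" by simp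
        then show "- ((?v i)\<^sup>2 / 4 + (mu i - mu1 i)\<^sup>2) \<le> ?v i * (mu i - mu1 i)"
          by (simp add: power2_eq_square algebra_simps)
      qed
      then show ?thesis by (simp only: sum_negf)
    qed
    moreover have "(\<Sum>i<n. (?v i)\<^sup>2 / 4 + (mu i - mu1 i)\<^sup>2) = V / 4 + (\<Sum>i<n. (mu i - mu1 i)\<^sup>2)"
      unfolding V_def by (simp add: sum.distrib sum_divide_distrib)
    ultimately show ?thesis using M V0 by linarith
  qed
  let ?S = "{x \<in> space (gauss n mu s). (\<Sum>i<n. ?v i * (x i - mu0 i)) \<le> V / 2}"
  let ?C = "{x \<in> space (gauss n mu s). - (l * (V / 2)) \<le> (\<Sum>i<n. 0 * (x i - mu0 i)\<^sup>2 + (\<lambda>i. - l * ?v i) i * (x i - mu0 i))}"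
  have sub: "?S \<subseteq> ?C" using lp by (auto simp: sum_negf sum_distrib_left[symmetric] mult.assoc)
  have "emeasure (gauss n mu s) ?S \<le> emeasure (gauss n mu s) ?C"
    by (rule emeasure_mono[OF sub chern_sets])
  also have "\<dots> \<le> ennreal (exp (- (- (l * (V / 2)))) * (\<Prod>i<n. G 0 ((\<lambda>i. - l * ?v i) i) (mu i - mu0 i) s))"
    by (rule gauss_chernoff[OF s(1) g])
  also have "(\<Prod>i<n. G 0 ((\<lambda>i. - l * ?v i) i) (mu i - mu0 i) s) = exp (- l * P + l\<^sup>2 * s\<^sup>2 * V / 2)"
  proof -
    have "(\<Prod>i<n. G 0 ((\<lambda>i. - l * ?v i) i) (mu i - mu0 i) s) = (\<Prod>i<n. exp (- l * (?v i * (mu i - mu0 i)) + l\<^sup>2 * s\<^sup>2 / 2 * (?v i)\<^sup>2))"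
    proof (intro prod.cong refl)
      fix i
      have "(- l * ?v i) * (mu i - mu0 i) + (- l * ?v i)\<^sup>2 * s\<^sup>2 / 2 = - l * (?v i * (mu i - mu0 i)) + l\<^sup>2 * s\<^sup>2 / 2 * (?v i)\<^sup>2"
        by (simp add: power_mult_distrib)
      then show "G 0 ((\<lambda>i. - l * ?v i) i) (mu i - mu0 i) s = exp (- l * (?v i * (mu i - mu0 i)) + l\<^sup>2 * s\<^sup>2 / 2 * (?v i)\<^sup>2)"
        by (simp only: G_a0[OF s(1)])
    qed
    also have "\<dots> = exp (\<Sum>i<n. - l * (?v i * (mu i - mu0 i)) + l\<^sup>2 * s\<^sup>2 / 2 * (?v i)\<^sup>2)" by (simp add: exp_sum)
    also have "(\<Sum>i<n. - l * (?v i * (mu i - mu0 i)) + l\<^sup>2 * s\<^sup>2 / 2 * (?v i)\<^sup>2) = - l * P + l\<^sup>2 * s\<^sup>2 / 2 * V"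
      unfolding V_def P_def by (simp only: sum.distrib sum_distrib_left[symmetric])
    also have "exp (- l * P + l\<^sup>2 * s\<^sup>2 / 2 * V) = exp (- l * P + l\<^sup>2 * s\<^sup>2 * V / 2)" by simp
    finally show ?thesis .
  qed
  also have "exp (- (- (l * (V / 2)))) * exp (- l * P + l\<^sup>2 * s\<^sup>2 * V / 2) = exp (l * (V / 2) - l * P + l\<^sup>2 * s\<^sup>2 * V / 2)"
    unfolding exp_add[symmetric] by (simp add: algebra_simps)
  also have "\<dots> \<le> exp (- V / (200 * sg\<^sup>2))"
  proof -
    have ls: "l * s\<^sup>2 \<le> 1 / 5" unfolding l_def using s sg by (simp add: field_simps)
    have "l * P \<ge> l * (7 * V / 10)" using P lp by (intro mult_left_mono) auto
    moreover have "l\<^sup>2 * s\<^sup>2 * V / 2 \<le> l * V / 10"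
    proof -
      have "l\<^sup>2 * s\<^sup>2 * V / 2 = (l * s\<^sup>2) * (l * V) / 2" by (simp add: power2_eq_square)
      also have "\<dots> \<le> (1/5) * (l * V) / 2" using ls lp V0 by (intro divide_right_mono mult_right_mono) auto
      finally show ?thesis by simp
    qed
    ultimately have "l * (V / 2) - l * P + l\<^sup>2 * s\<^sup>2 * V / 2 \<le> - (l * V / 10)" by (simp add: algebra_simps)
    also have "\<dots> = - V / (200 * sg\<^sup>2)" unfolding l_def using sg by (simp add: field_simps)
    finally show ?thesis by simp
  qed
  finally have "emeasure (gauss n mu s) ?S \<le> ennreal (exp (- V / (200 * sg\<^sup>2)))"
    using ennreal_leI by blast
  then show ?thesis by (intro meas_le) auto
qed



lemma int_if:
  assumes s: "s > 0" and A: "{x \<in> space (gauss n mu s). P x} \<in> sets (gauss n mu s)"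
  shows "(\<integral>x. (if P x then 1 else 0) \<partial>gauss n mu s) = measure (gauss n mu s) {x \<in> space (gauss n mu s). P x}"
proof -
  interpret prob_space "gauss n mu s" by (rule gauss_prob[OF s])
  have "(\<integral>x. (if P x then 1 else 0) \<partial>gauss n mu s) = (\<integral>x. indicator {x \<in> space (gauss n mu s). P x} x \<partial>gauss n mu s)"
    by (intro Bochner_Integration.integral_cong) (auto simp: indicator_def)
  also have "\<dots> = measure (gauss n mu s) {x \<in> space (gauss n mu s). P x}"
    using A by (simp add: integral_indicator)
  finally show ?thesis .
qed

lemma int_if_compl:
  assumes s: "s > 0" and A: "{x \<in> space (gauss n mu s). \<not> P x} \<in> sets (gauss n mu s)"
  shows "(\<integral>x. 1 - (if P x then 1 else 0) \<partial>gauss n mu s) = measure (gauss n mu s) {x \<in> space (gauss n mu s). \<not> P x}"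
proof -
  have "(\<integral>x. 1 - (if P x then 1 else 0) \<partial>gauss n mu s) = (\<integral>x. (if \<not> P x then 1 else 0) \<partial>gauss n mu s)"
    by (intro Bochner_Integration.integral_cong) auto
  also have "\<dots> = measure (gauss n mu s) {x \<in> space (gauss n mu s). \<not> P x}"
    by (rule int_if[OF s A])
  finally show ?thesis .
qed

lemma exp_final:
  assumes "0 < c" "c \<le> 1000" "sg > 0"
  shows "exp (- real n * d\<^sup>2 / sg\<^sup>2 / c) \<le> exp (- (1/1000) * real n * d ^ 2 / sg ^ 2)"
proof -
  have X: "real n * d\<^sup>2 / sg\<^sup>2 \<ge> 0" by simp
  have "real n * d\<^sup>2 / sg\<^sup>2 / 1000 \<le> real n * d\<^sup>2 / sg\<^sup>2 / c"
    using assms X by (intro divide_left_mono) auto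
  then show ?thesis by simp
qed

lemma exp_finalV:
  assumes "0 < c" "c \<le> 250" "sg > 0" "V \<ge> 3 * real n * d\<^sup>2 / 4"
  shows "exp (- V / (c * sg\<^sup>2)) \<le> exp (- (1/1000) * real n * d ^ 2 / sg ^ 2)"
proof -
  have X: "real n * d\<^sup>2 \<ge> 0" by simp
  have "real n * d\<^sup>2 / 1000 \<le> (3 * real n * d\<^sup>2 / 4) / c"
  proof -
    have "c * (real n * d\<^sup>2) \<le> 750 * (real n * d\<^sup>2)" using assms X by (intro mult_right_mono) auto
    then show ?thesis using assms by (simp add: field_simps)
  qed
  also have "\<dots> \<le> V / c" using assms by (intro divide_right_mono) auto
  finally have "real n * d\<^sup>2 / 1000 / sg\<^sup>2 \<le> V / c / sg\<^sup>2" using assms by (intro divide_right_mono) auto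
  then show ?thesis by (simp add: field_simps)
qed



theorem theorem1:
  shows "\<exists>K>0. \<forall>(n::nat) (mu0::nat \<Rightarrow> real) (sig0::real) (eps::real) (mu1::nat \<Rightarrow> real) (sig1::real).
     n \<ge> 1 \<and> sig0 > 0 \<and> 0 < eps \<and> eps < sig0 \<and> sig1 > 0 \<and>
     gdist n (mu1, sig1) (mu0, sig0) \<ge> eps \<longrightarrow>
     (\<exists>phi \<in> borel_measurable (PiM {..<n} (\<lambda>_. lborel)).
        (\<forall>x. phi x \<in> {0, 1}) \<and>
        (\<integral>x. phi x \<partial>gauss n mu0 sig0) \<le> exp (- K * real n * eps^2 / sig0^2) \<and>
        (\<forall>mu s. s > 0 \<and> gdist n (mu, s) (mu1, sig1) \<le> eps / 6 \<longrightarrow>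
           (\<integral>x. 1 - phi x \<partial>gauss n mu s) \<le> exp (- K * real n * eps^2 / sig0^2)))"
proof (intro exI[of _ "1/1000"] conjI allI impI)
  show "(0::real) < 1/1000" by simp
  fix n :: nat and mu0 :: "nat \<Rightarrow> real" and sg d :: real and mu1 :: "nat \<Rightarrow> real" and sig1 :: real
  assume H: "n \<ge> 1 \<and> sg > 0 \<and> 0 < d \<and> d < sg \<and> sig1 > 0 \<and> gdist n (mu1, sig1) (mu0, sg) \<ge> d"
  then have n: "n \<ge> 1" and sg: "sg > 0" and d: "0 < d" "d < sg" and s1: "sig1 > 0"
    and gd: "gdist n (mu1, sig1) (mu0, sg) \<ge> d" by auto
  have npos: "real n > 0" using n by simp
  define V where "V = (\<Sum>i<n. (mu1 i - mu0 i)\<^sup>2)"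
  have V0: "V \<ge> 0" unfolding V_def by (simp add: sum_nonneg)
  have sep: "V / real n + (sig1 - sg)\<^sup>2 \<ge> d\<^sup>2"
  proof -
    have "d \<le> sqrt (V / real n + (sig1 - sg)\<^sup>2)" using gd unfolding gdist_def V_def by simp
    then have "d\<^sup>2 \<le> (sqrt (V / real n + (sig1 - sg)\<^sup>2))\<^sup>2" using d by (intro power_mono) auto
    also have "\<dots> = V / real n + (sig1 - sg)\<^sup>2" using V0 npos by simp
    finally show ?thesis .
  qed
  have alt: "(\<Sum>i<n. (mu i - mu1 i)\<^sup>2) \<le> real n * (d\<^sup>2 / 36) \<and> \<bar>s - sig1\<bar> \<le> d / 6"
    if "gdist n (mu, s) (mu1, sig1) \<le> d / 6" for mu s
  proof -
    define MM where "MM = (\<Sum>i<n. (mu i - mu1 i)\<^sup>2)"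
    have M0: "MM \<ge> 0" unfolding MM_def by (simp add: sum_nonneg)
    have X0: "MM / real n + (s - sig1)\<^sup>2 \<ge> 0" using M0 npos by simp
    have "sqrt (MM / real n + (s - sig1)\<^sup>2) \<le> d / 6" using that unfolding gdist_def MM_def by simp
    then have "(sqrt (MM / real n + (s - sig1)\<^sup>2))\<^sup>2 \<le> (d / 6)\<^sup>2" using X0 by (intro power_mono) auto
    then have X: "MM / real n + (s - sig1)\<^sup>2 \<le> d\<^sup>2 / 36" using X0 by (simp add: power_divide)
    have "MM / real n \<le> d\<^sup>2 / 36" using X zero_le_power2[of "s - sig1"] by linarith
    then have "MM \<le> real n * (d\<^sup>2 / 36)" using npos by (simp add: field_simps)
    moreover have "(s - sig1)\<^sup>2 \<le> (d / 6)\<^sup>2"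
    proof -
      have "MM / real n \<ge> 0" using M0 npos by simp
      then have "(s - sig1)\<^sup>2 \<le> d\<^sup>2 / 36" using X by linarith
      then show ?thesis by (simp add: power_divide)
    qed
    then have "\<bar>s - sig1\<bar> \<le> d / 6" using d by (simp add: power2_le_iff_abs_le)
    ultimately show ?thesis unfolding MM_def by simp
  qed
  consider (A) "sig1 \<ge> sg + d / 2" | (B) "sig1 \<le> sg - d / 2" | (C) "\<bar>sig1 - sg\<bar> < d / 2" by linarith
  then show "\<exists>phi \<in> borel_measurable (PiM {..<n} (\<lambda>_. lborel)).
        (\<forall>x. phi x \<in> {0, 1}) \<and>
        (\<integral>x. phi x \<partial>gauss n mu0 sg) \<le> exp (- (1/1000) * real n * d^2 / sg^2) \<and>
        (\<forall>mu s. s > 0 \<and> gdist n (mu, s) (mu1, sig1) \<le> d / 6 \<longrightarrow>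
           (\<integral>x. 1 - phi x \<partial>gauss n mu s) \<le> exp (- (1/1000) * real n * d^2 / sg^2))"
  proof cases
    case A
    define T where "T = real n * (sg\<^sup>2 + sg * d / 3)"
    let ?phi = "\<lambda>x. if T < (\<Sum>i<n. (x i - mu0 i)\<^sup>2) then 1 else (0::real)"
    show ?thesis
    proof (intro bexI[of _ ?phi] conjI allI impI)
      show "?phi \<in> borel_measurable (PiM {..<n} (\<lambda>_. lborel))" by measurable
      show "?phi x \<in> {0, 1}" for x by simp
      have "(\<integral>x. ?phi x \<partial>gauss n mu0 sg) = measure (gauss n mu0 sg) {x \<in> space (gauss n mu0 sg). T < (\<Sum>i<n. (x i - mu0 i)\<^sup>2)}"
        by (rule int_if[OF sg]) (unfold gauss_sets gauss_space, measurable)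
      also have "\<dots> \<le> exp (- real n * d\<^sup>2 / sg\<^sup>2 / 144)" unfolding T_def by (rule caseA_null[OF sg d])
      also have "\<dots> \<le> exp (- (1/1000) * real n * d^2 / sg^2)" by (rule exp_final) (use sg in auto)
      finally show "(\<integral>x. ?phi x \<partial>gauss n mu0 sg) \<le> exp (- (1/1000) * real n * d^2 / sg^2)" .
    next
      fix mu s assume ms: "s > 0 \<and> gdist n (mu, s) (mu1, sig1) \<le> d / 6"
      then have s: "s > 0" and a: "\<bar>s - sig1\<bar> \<le> d / 6" using alt by auto
      have s2: "sg + d / 3 \<le> s" using a A by linarith
      have "(\<integral>x. 1 - ?phi x \<partial>gauss n mu s) = measure (gauss n mu s) {x \<in> space (gauss n mu s). \<not> T < (\<Sum>i<n. (x i - mu0 i)\<^sup>2)}"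
        by (rule int_if_compl[OF s]) (unfold gauss_sets gauss_space, measurable)
      also have "{x \<in> space (gauss n mu s). \<not> T < (\<Sum>i<n. (x i - mu0 i)\<^sup>2)} = {x \<in> space (gauss n mu s). (\<Sum>i<n. (x i - mu0 i)\<^sup>2) \<le> T}"
        by (auto simp: not_less)
      also have "measure (gauss n mu s) \<dots> \<le> exp (- real n * d\<^sup>2 / sg\<^sup>2 / 200)" unfolding T_def by (rule caseA_alt[OF sg d s s2])
      also have "\<dots> \<le> exp (- (1/1000) * real n * d^2 / sg^2)" by (rule exp_final) (use sg in auto)
      finally show "(\<integral>x. 1 - ?phi x \<partial>gauss n mu s) \<le> exp (- (1/1000) * real n * d^2 / sg^2)" .
    qed
  next
    case B
    define T where "T = real n * (sg\<^sup>2 - sg * d / 3)"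
    let ?phi = "\<lambda>x. if (\<Sum>i<n. (x i - mu1 i)\<^sup>2) < T then 1 else (0::real)"
    show ?thesis
    proof (intro bexI[of _ ?phi] conjI allI impI)
      show "?phi \<in> borel_measurable (PiM {..<n} (\<lambda>_. lborel))" by measurable
      show "?phi x \<in> {0, 1}" for x by simp
      have "(\<integral>x. ?phi x \<partial>gauss n mu0 sg) = measure (gauss n mu0 sg) {x \<in> space (gauss n mu0 sg). (\<Sum>i<n. (x i - mu1 i)\<^sup>2) < T}"
        by (rule int_if[OF sg]) (unfold gauss_sets gauss_space, measurable)
      also have "\<dots> \<le> exp (- real n * d\<^sup>2 / sg\<^sup>2 / 72)" unfolding T_def by (rule caseB_null[OF sg d])
      also have "\<dots> \<le> exp (- (1/1000) * real n * d^2 / sg^2)" by (rule exp_final) (use sg in auto)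
      finally show "(\<integral>x. ?phi x \<partial>gauss n mu0 sg) \<le> exp (- (1/1000) * real n * d^2 / sg^2)" .
    next
      fix mu s assume ms: "s > 0 \<and> gdist n (mu, s) (mu1, sig1) \<le> d / 6"
      then have s: "s > 0" and a: "\<bar>s - sig1\<bar> \<le> d / 6" and M: "(\<Sum>i<n. (mu i - mu1 i)\<^sup>2) \<le> real n * (d\<^sup>2 / 36)"
        using alt by auto
      have s2: "s \<le> sg - d / 3" using a B by linarith
      have "(\<integral>x. 1 - ?phi x \<partial>gauss n mu s) = measure (gauss n mu s) {x \<in> space (gauss n mu s). \<not> (\<Sum>i<n. (x i - mu1 i)\<^sup>2) < T}"
        by (rule int_if_compl[OF s]) (unfold gauss_sets gauss_space, measurable)
      also have "{x \<in> space (gauss n mu s). \<not> (\<Sum>i<n. (x i - mu1 i)\<^sup>2) < T} = {x \<in> space (gauss n mu s). T \<le> (\<Sum>i<n. (x i - mu1 i)\<^sup>2)}"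
        by (auto simp: not_less)
      also have "measure (gauss n mu s) \<dots> \<le> exp (- real n * d\<^sup>2 / sg\<^sup>2 / 432)" unfolding T_def by (rule caseB_alt[OF sg d s s2 M])
      also have "\<dots> \<le> exp (- (1/1000) * real n * d^2 / sg^2)" by (rule exp_final) (use sg in auto)
      finally show "(\<integral>x. 1 - ?phi x \<partial>gauss n mu s) \<le> exp (- (1/1000) * real n * d^2 / sg^2)" .
    qed
  next
    case C
    have "(sig1 - sg)\<^sup>2 \<le> (d / 2)\<^sup>2" using C d by (simp add: power2_le_iff_abs_le)
    then have "(sig1 - sg)\<^sup>2 \<le> d\<^sup>2 / 4" by (simp add: power_divide)
    then have "V / real n \<ge> 3 * d\<^sup>2 / 4" using sep by linarith
    then have Vb: "V \<ge> 3 * real n * d\<^sup>2 / 4" using npos by (simp add: field_simps)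
    let ?phi = "\<lambda>x. if V / 2 < (\<Sum>i<n. (mu1 i - mu0 i) * (x i - mu0 i)) then 1 else (0::real)"
    show ?thesis
    proof (intro bexI[of _ ?phi] conjI allI impI)
      show "?phi \<in> borel_measurable (PiM {..<n} (\<lambda>_. lborel))" by measurable
      show "?phi x \<in> {0, 1}" for x by simp
      have "(\<integral>x. ?phi x \<partial>gauss n mu0 sg) = measure (gauss n mu0 sg) {x \<in> space (gauss n mu0 sg). V / 2 < (\<Sum>i<n. (mu1 i - mu0 i) * (x i - mu0 i))}"
        by (rule int_if[OF sg]) (unfold gauss_sets gauss_space, measurable)
      also have "\<dots> \<le> exp (- V / (8 * sg\<^sup>2))" unfolding V_def by (rule caseC_null[OF sg])
      also have "\<dots> \<le> exp (- (1/1000) * real n * d^2 / sg^2)" by (rule exp_finalV) (use sg Vb in auto)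
      finally show "(\<integral>x. ?phi x \<partial>gauss n mu0 sg) \<le> exp (- (1/1000) * real n * d^2 / sg^2)" .
    next
      fix mu s assume ms: "s > 0 \<and> gdist n (mu, s) (mu1, sig1) \<le> d / 6"
      then have s: "s > 0" and a: "\<bar>s - sig1\<bar> \<le> d / 6" and M: "(\<Sum>i<n. (mu i - mu1 i)\<^sup>2) \<le> real n * (d\<^sup>2 / 36)"
        using alt by auto
      have "s \<le> 2 * sg" using a C d by linarith
      then have "s\<^sup>2 \<le> (2 * sg)\<^sup>2" using s by (intro power_mono) auto
      then have s2: "s\<^sup>2 \<le> 4 * sg\<^sup>2" by (simp add: power_mult_distrib)
      have M2: "(\<Sum>i<n. (mu i - mu1 i)\<^sup>2) \<le> V / 27" using M Vb by linarith
      have "(\<integral>x. 1 - ?phi x \<partial>gauss n mu s) = measure (gauss n mu s) {x \<in> space (gauss n mu s). \<not> V / 2 < (\<Sum>i<n. (mu1 i - mu0 i) * (x i - mu0 i))}"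
        by (rule int_if_compl[OF s]) (unfold gauss_sets gauss_space, measurable)
      also have "{x \<in> space (gauss n mu s). \<not> V / 2 < (\<Sum>i<n. (mu1 i - mu0 i) * (x i - mu0 i))} = {x \<in> space (gauss n mu s). (\<Sum>i<n. (mu1 i - mu0 i) * (x i - mu0 i)) \<le> V / 2}"
        by (auto simp: not_less)
      also have "measure (gauss n mu s) \<dots> \<le> exp (- V / (200 * sg\<^sup>2))"
        unfolding V_def by (rule caseC_alt[OF sg s s2 M2[unfolded V_def]])
      also have "\<dots> \<le> exp (- (1/1000) * real n * d^2 / sg^2)" by (rule exp_finalV) (use sg Vb in auto)
      finally show "(\<integral>x. 1 - ?phi x \<partial>gauss n mu s) \<le> exp (- (1/1000) * real n * d^2 / sg^2)" .
    qed
  qed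
qed

end
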